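(* Let $\mathcal{I}$ be the input simplicial model, let $\langle\mathcal{I},\mathcal{P},\Psi\rangle$ be a simplicial protocol, and let $\mathbf{P}=\kappa(\langle\mathcal{I},\mathcal{P},\Psi\rangle)$. Then the action model $\mathbf{P}$ and the partial product update model $\mathcal{I}[\![\mathbf{P}]\!]$ have isomorphic partial epistemic frames, i.e. there is a bijection between the actions of $\mathbf{P}$ and the worlds of $\mathcal{I}[\![\mathbf{P}]\!]$ which, for every agent $a$, preserves and reflects the relation $\sim_a$.
   Context: Agents $\mathsf{Ag}=\{0,\dots,n-1\}$, $n>1$; $\mathsf{Value}=\mathsf{Ag}$; atoms $\mathsf{At}_a=\{\mathrm{input}_a^v\mid v\in\mathsf{Value}\}$. A chromatic simplicial complex $\langle V,S,\chi\rangle$ here has a finite vertex set $V\subseteq\mathsf{Ag}\times\mathsf{Value}$, coloring $\chi((a,v))=a$, and a set $S$ of nonempty subsets of $V$ closed under nonempty subsets in which distinct vertices of a simplex have distinct colors; facets are maximal simplices, $\mathcal{F}(\mathcal{C})$ is the set of facets, and $\chi(X)=\{\chi(v)\mid v\in X\}$. The input simplicial model $\mathcal{I}$ has vertices $\mathsf{Ag}\times\mathsf{Value}$ and simplices all nonempty subsets of sets $\{(0,v_0),\dots,(n-1,v_{n-1})\}$; its facets are these full sets, labeled $\ell^{\mathcal{I}}(X)=\{\mathrm{input}_a^v\mid(a,v)\in X\}$; as a partial epistemic model its worlds are its facets with $X\sim_aY$ iff $a\in\chi(X\cap Y)$ and labels $\ell^{\mathcal{I}}$. A facet map $\Theta:\mathcal{F}(\mathcal{C})\to\mathcal{P}(\mathcal{F}(\mathcal{D}))$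 satisfies $\bigcup_{Y\in\Theta(X)}\chi(Y)\subseteq\chi(X)$ for all $X$, and $\mathcal{F}(\mathcal{D})=\bigcup_X\Theta(X)$. A simplicial protocol $\langle\mathcal{I},\mathcal{P},\Psi\rangle$ consists of a complex $\mathcal{P}$ and a facet map $\Psi:\mathcal{F}(\mathcal{I})\to\mathcal{P}(\mathcal{F}(\mathcal{P}))$ such that $\chi(Y\cap Y')\subseteq\chi(X\cap X')$ whenever $Y\in\Psi(X)$, $Y'\in\Psi(X')$. The translation $\kappa(\langle\mathcal{I},\mathcal{D},\Theta\rangle)$ is the action model with actions $\mathcal{F}(\mathcal{D})$, $Y\sim_aY'$ iff $a\in\chi(Y\cap Y')$, and $\mathsf{pre}(Y)=\bigvee\{\bigwedge\ell^{\mathcal{I}}(X)\mid X\in\mathcal{F}(\mathcal{I}),Y\in\Theta(X)\}$. An action model is a partial epistemic frame (set with partial equivalence relations $\sim_a$) plus precondition formulas (epistemic logic with $K_a$); $\mathrm{Alive}(t)=\{a\mid t\sim_at\}$, $w\sim_Aw'$ means $w\sim_aw'$ for all $a\in A$. Partial product update $\mathcal{I}[\![\mathbf{A}]\!]$: with $\langle X\rangle_t=\{Y\mid X\sim^{\mathcal{I}}_{\mathrm{Alive}(t)}Y,\ \mathcal{I},Y\models\mathsf{pre}(t)\}$, worlds are $(\langle X\rangle_t,t)$ with $\mathrm{Alive}(t)\subseteq\mathrm{Alive}(X)$ and $\mathcal{I},X\models\mathsf{pre}(t)$; $(\langle X\rangle_t,t)\sim_a(\langle Y\rangle_s,s)$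 iff $X\sim^{\mathcal{I}}_aY$ and $t\sim_as$; label $\bigcap_{X'\in\langle X\rangle_t}\ell^{\mathcal{I}}(X')$. *)

theory Defs
  imports Main
begin

(* Agents Ag = {0..<n}, Value = Ag.  A vertex is a pair (a, v) :: nat \<times> nat with colour a.
   The atom input_a^v is represented by the pair (a, v). *)

type_synonym vtx = "nat \<times> nat"
type_synonym atom = "nat \<times> nat"

datatype form = Atom atom | Neg form | Conj "form list" | Disj "form list" | K nat form

record 'w pem =
  W :: "'w set"
  R :: "nat \<Rightarrow> ('w \<times> 'w) set"
  L :: "'w \<Rightarrow> atom set"

record 'a actm =
  Act :: "'a set"
  AR :: "nat \<Rightarrow> ('a \<times> 'a) set"
  pre :: "'a \<Rightarrow> form"

primrec sat :: "'w pem \<Rightarrow> 'w \<Rightarrow> form \<Rightarrow> bool" where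
  "sat M w (Atom p) = (p \<in> L M w)"
| "sat M w (Neg \<phi>) = (\<not> sat M w \<phi>)"
| "sat M w (Conj xs) = list_all id (map (sat M w) xs)"
| "sat M w (Disj xs) = list_ex id (map (sat M w) xs)"
| "sat M w (K a \<phi>) = (\<forall>v. (w, v) \<in> R M a \<longrightarrow> sat M v \<phi>)"

definition alive :: "(nat \<Rightarrow> ('x \<times> 'x) set) \<Rightarrow> 'x \<Rightarrow> nat set" where
  "alive Rel x = {a. (x, x) \<in> Rel a}"

definition rel_set :: "(nat \<Rightarrow> ('x \<times> 'x) set) \<Rightarrow> nat set \<Rightarrow> 'x \<Rightarrow> 'x \<Rightarrow> bool" where
  "rel_set Rel A x y = (\<forall>a\<in>A. (x, y) \<in> Rel a)"

definition cls :: "'w pem \<Rightarrow> 'a actm \<Rightarrow> 'w \<Rightarrow> 'a \<Rightarrow> 'w set" where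
  "cls M A X t = {Y \<in> W M. rel_set (R M) (alive (AR A) t) X Y \<and> sat M Y (pre A t)}"

definition upd_ok :: "'w pem \<Rightarrow> 'a actm \<Rightarrow> 'w \<Rightarrow> 'a \<Rightarrow> bool" where
  "upd_ok M A X t = (X \<in> W M \<and> t \<in> Act A \<and> alive (AR A) t \<subseteq> alive (R M) X \<and> sat M X (pre A t))"

definition update :: "'w pem \<Rightarrow> 'a actm \<Rightarrow> ('w set \<times> 'a) pem" where
  "update M A = \<lparr>
     W = {(cls M A X t, t) | X t. upd_ok M A X t},
     R = (\<lambda>a. {((cls M A X t, t), (cls M A Y s, s)) | X t Y s.
                 upd_ok M A X t \<and> upd_ok M A Y s \<and> (X, Y) \<in> R M a \<and> (t, s) \<in> AR A a}),
     L = (\<lambda>(C, t). \<Inter>X'\<in>C. L M X') \<rparr>"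

type_synonym cplx = "vtx set \<times> vtx set set"

definition chi :: "vtx set \<Rightarrow> nat set" where
  "chi X = fst ` X"

definition is_complex :: "nat \<Rightarrow> cplx \<Rightarrow> bool" where
  "is_complex n C = (finite (fst C) \<and> fst C \<subseteq> {0..<n} \<times> {0..<n}
     \<and> (\<forall>X\<in>snd C. X \<noteq> {} \<and> X \<subseteq> fst C \<and> inj_on fst X)
     \<and> (\<forall>X\<in>snd C. \<forall>Y. Y \<noteq> {} \<and> Y \<subseteq> X \<longrightarrow> Y \<in> snd C))"

definition facets :: "cplx \<Rightarrow> vtx set set" where
  "facets C = {X \<in> snd C. \<forall>Y\<in>snd C. X \<subseteq> Y \<longrightarrow> X = Y}"

definition input_cplx :: "nat \<Rightarrow> cplx" where
  "input_cplx n = ({0..<n} \<times> {0..<n},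
     {X. X \<noteq> {} \<and> (\<exists>f. (\<forall>a<n. f a < n) \<and> X \<subseteq> {(a, f a) | a. a < n})})"

definition facet_map :: "cplx \<Rightarrow> cplx \<Rightarrow> (vtx set \<Rightarrow> vtx set set) \<Rightarrow> bool" where
  "facet_map C D \<Theta> = ((\<forall>X\<in>facets C. \<Theta> X \<subseteq> facets D \<and> (\<Union>Y\<in>\<Theta> X. chi Y) \<subseteq> chi X)
     \<and> facets D = (\<Union>X\<in>facets C. \<Theta> X))"

definition simplicial_protocol :: "nat \<Rightarrow> cplx \<Rightarrow> (vtx set \<Rightarrow> vtx set set) \<Rightarrow> bool" where
  "simplicial_protocol n P \<Psi> = (is_complex n P \<and> facet_map (input_cplx n) P \<Psi>
     \<and> (\<forall>X\<in>facets (input_cplx n). \<forall>X'\<in>facets (input_cplx n). \<forall>Y\<in>\<Psi> X. \<forall>Y'\<in>\<Psi> X'.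
           chi (Y \<inter> Y') \<subseteq> chi (X \<inter> X')))"

text \<open>Labels \<ell>(X) = {input_a^v | (a,v) \<in> X}; atoms are represented by the vertex pairs.\<close>
definition lab :: "vtx set \<Rightarrow> atom set" where
  "lab X = X"

definition input_model :: "nat \<Rightarrow> vtx set pem" where
  "input_model n = \<lparr> W = facets (input_cplx n),
     R = (\<lambda>a. {(X, Y). X \<in> facets (input_cplx n) \<and> Y \<in> facets (input_cplx n) \<and> a \<in> chi (X \<inter> Y)}),
     L = lab \<rparr>"

text \<open>Big conjunction / disjunction of a finite set of formulas (order irrelevant for semantics).\<close>
definition BigConj :: "form set \<Rightarrow> form" where
  "BigConj F = Conj (SOME xs. set xs = F \<and> distinct xs)"

definition BigDisj :: "form set \<Rightarrow> form" where
  "BigDisj F = Disj (SOME xs. set xs = F \<and> distinct xs)"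

definition kappa :: "nat \<Rightarrow> cplx \<Rightarrow> (vtx set \<Rightarrow> vtx set set) \<Rightarrow> vtx set actm" where
  "kappa n D \<Theta> = \<lparr> Act = facets D,
     AR = (\<lambda>a. {(Y, Y'). Y \<in> facets D \<and> Y' \<in> facets D \<and> a \<in> chi (Y \<inter> Y')}),
     pre = (\<lambda>Y. BigDisj {BigConj (Atom ` lab X) | X. X \<in> facets (input_cplx n) \<and> Y \<in> \<Theta> X}) \<rparr>"

end

theory Submission
  imports Defs
begin

lemma some_list_set: "finite F \<Longrightarrow> set (SOME xs. set xs = F \<and> distinct xs) = F"
  by (metis (mono_tags, lifting) finite_distinct_list someI_ex)

lemma sat_BigConj: "finite F \<Longrightarrow> sat M w (BigConj F) = (\<forall>\<phi>\<in>F. sat M w \<phi>)"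
  unfolding BigConj_def by (simp add: some_list_set list_all_iff)

lemma sat_BigDisj: "finite F \<Longrightarrow> sat M w (BigDisj F) = (\<exists>\<phi>\<in>F. sat M w \<phi>)"
  unfolding BigDisj_def by (simp add: some_list_set list_ex_iff)

lemma facets_input_sub: "X \<in> facets (input_cplx n) \<Longrightarrow> X \<subseteq> {0..<n} \<times> {0..<n}"
  unfolding facets_def input_cplx_def by auto

lemma facets_input_finite: "finite (facets (input_cplx n))"
proof -
  have "facets (input_cplx n) \<subseteq> Pow ({0..<n} \<times> {0..<n})" using facets_input_sub by blast
  then show ?thesis by (rule finite_subset) simp
qed

lemma facets_input_fun: "X \<in> facets (input_cplx n) \<Longrightarrow> (a, v) \<in> X \<Longrightarrow> (a, w) \<in> X \<Longrightarrow> v = w"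
  unfolding facets_def input_cplx_def by auto

lemma facets_max: "X \<in> facets C \<Longrightarrow> Y \<in> facets C \<Longrightarrow> X \<subseteq> Y \<Longrightarrow> X = Y"
  unfolding facets_def by auto

lemma sat_pre:
  assumes "Y \<in> facets (input_cplx n)"
  shows "sat (input_model n) Y (pre (kappa n P \<Psi>) t) = (t \<in> \<Psi> Y)"
proof -
  let ?S = "{BigConj (Atom ` lab X) | X. X \<in> facets (input_cplx n) \<and> t \<in> \<Psi> X}"
  have fin: "finite ?S"
  proof -
    have "?S = (\<lambda>X. BigConj (Atom ` lab X)) ` {X \<in> facets (input_cplx n). t \<in> \<Psi> X}" by auto
    then show ?thesis using facets_input_finite by simp
  qed
  have c: "sat (input_model n) Y (BigConj (Atom ` lab X)) = (X \<subseteq> Y)"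
    if "X \<in> facets (input_cplx n)" for X
  proof -
    have "finite X" using facets_input_sub[OF that] by (rule finite_subset) simp
    then show ?thesis by (simp add: sat_BigConj lab_def input_model_def) blast
  qed
  have "sat (input_model n) Y (pre (kappa n P \<Psi>) t) = (\<exists>X\<in>facets (input_cplx n). t \<in> \<Psi> X \<and> X \<subseteq> Y)"
    by (simp add: kappa_def sat_BigDisj[OF fin]) (use c in blast)
  also have "\<dots> = (t \<in> \<Psi> Y)" using assms facets_max by blast
  finally show ?thesis .
qed


lemma chi_iff: "a \<in> chi X \<longleftrightarrow> (\<exists>v. (a, v) \<in> X)"
  unfolding chi_def by force

lemma alive_AR: "t \<in> facets P \<Longrightarrow> alive (AR (kappa n P \<Psi>)) t = chi t"
  unfolding alive_def kappa_def by simp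

lemma alive_R: "X \<in> facets (input_cplx n) \<Longrightarrow> alive (R (input_model n)) X = chi X"
  unfolding alive_def input_model_def by simp

lemma upd_ok_iff:
  assumes "simplicial_protocol n P \<Psi>"
  shows "upd_ok (input_model n) (kappa n P \<Psi>) X t =
         (X \<in> facets (input_cplx n) \<and> t \<in> facets P \<and> t \<in> \<Psi> X)"
proof -
  have fm: "facet_map (input_cplx n) P \<Psi>" using assms unfolding simplicial_protocol_def by simp
  show ?thesis
  proof
    assume "upd_ok (input_model n) (kappa n P \<Psi>) X t"
    then     show "X \<in> facets (input_cplx n) \<and> t \<in> facets P \<and> t \<in> \<Psi> X"
    proof -
      assume u: "upd_ok (input_model n) (kappa n P \<Psi>) X t"
      have X: "X \<in> facets (input_cplx n)" and t: "t \<in> facets P"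
        using u unfolding upd_ok_def by (simp_all add: input_model_def kappa_def)
      have "sat (input_model n) X (pre (kappa n P \<Psi>) t)" using u unfolding upd_ok_def by simp
      then show ?thesis using X t sat_pre[OF X] by simp
    qed
  next
    assume h: "X \<in> facets (input_cplx n) \<and> t \<in> facets P \<and> t \<in> \<Psi> X"
    then have "chi t \<subseteq> chi X" using fm unfolding facet_map_def by blast
    then show "upd_ok (input_model n) (kappa n P \<Psi>) X t"
      unfolding upd_ok_def using h sat_pre[of X n P \<Psi> t] alive_AR[of t P n \<Psi>] alive_R[of X n]
      by (simp add: input_model_def kappa_def)
  qed
qed

lemma cls_eq:
  assumes "t \<in> facets P" "X \<in> facets (input_cplx n)"
  shows "cls (input_model n) (kappa n P \<Psi>) X t =
     {Y \<in> facets (input_cplx n). chi t \<subseteq> chi (X \<inter> Y) \<and> t \<in> \<Psi> Y}"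
  using assms sat_pre[of _ n P \<Psi> t] alive_AR[OF assms(1), of n \<Psi>]
  unfolding cls_def rel_set_def
  by (auto simp: input_model_def)

lemma cls_indep:
  assumes "simplicial_protocol n P \<Psi>" "t \<in> facets P"
    "X \<in> facets (input_cplx n)" "X' \<in> facets (input_cplx n)" "t \<in> \<Psi> X" "t \<in> \<Psi> X'"
  shows "cls (input_model n) (kappa n P \<Psi>) X t = cls (input_model n) (kappa n P \<Psi>) X' t"
proof -
  have "chi (t \<inter> t) \<subseteq> chi (X \<inter> X')"
    using assms(1) assms(3-6) unfolding simplicial_protocol_def by blast
  then have ct: "chi t \<subseteq> chi (X \<inter> X')" by simp
  have "chi t \<subseteq> chi (X \<inter> Y) \<longleftrightarrow> chi t \<subseteq> chi (X' \<inter> Y)" if Y: "Y \<in> facets (input_cplx n)" for Y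
  proof -
    have "a \<in> chi (X \<inter> Y) \<longleftrightarrow> a \<in> chi (X' \<inter> Y)" if a: "a \<in> chi t" for a
    proof -
      from ct a obtain v where v: "(a, v) \<in> X" "(a, v) \<in> X'" using chi_iff[of a "X \<inter> X'"] by blast
      show ?thesis
      proof
        assume "a \<in> chi (X \<inter> Y)"
        then obtain w where "(a, w) \<in> X" "(a, w) \<in> Y" using chi_iff by blast
        then have "v = w" using v facets_input_fun[OF assms(3)] by blast
        with \<open>(a, w) \<in> Y\<close> have "(a, v) \<in> Y" by simp
        with v show "a \<in> chi (X' \<inter> Y)" using chi_iff by blast
      next
        assume "a \<in> chi (X' \<inter> Y)"
        then obtain w where "(a, w) \<in> X'" "(a, w) \<in> Y" using chi_iff by blast
        then have "v = w" using v facets_input_fun[OF assms(4)] by blast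
        with \<open>(a, w) \<in> Y\<close> have "(a, v) \<in> Y" by simp
        with v show "a \<in> chi (X \<inter> Y)" using chi_iff by blast
      qed
    qed
    then show ?thesis by blast
  qed
  then show ?thesis unfolding cls_eq[OF assms(2) assms(3)] cls_eq[OF assms(2) assms(4)]
    by (intro Collect_cong) blast
qed


theorem propositionA3:
  fixes n :: nat and P :: cplx and \<Psi> :: "vtx set \<Rightarrow> vtx set set"
  assumes "n > 1"
    and "simplicial_protocol n P \<Psi>"
  shows "\<exists>f. bij_betw f (Act (kappa n P \<Psi>)) (W (update (input_model n) (kappa n P \<Psi>)))
           \<and> (\<forall>a<n. \<forall>t\<in>Act (kappa n P \<Psi>). \<forall>s\<in>Act (kappa n P \<Psi>).
                 (t, s) \<in> AR (kappa n P \<Psi>) a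
                   \<longleftrightarrow> (f t, f s) \<in> R (update (input_model n) (kappa n P \<Psi>)) a)"
proof -
  let ?M = "input_model n" and ?A = "kappa n P \<Psi>"
  define r where "r t = (SOME X. X \<in> facets (input_cplx n) \<and> t \<in> \<Psi> X)" for t
  define f where "f t = (cls ?M ?A (r t) t, t)" for t
  have sp: "simplicial_protocol n P \<Psi>" by fact
  have fm: "facet_map (input_cplx n) P \<Psi>" using sp unfolding simplicial_protocol_def by simp
  have r: "r t \<in> facets (input_cplx n) \<and> t \<in> \<Psi> (r t)" if "t \<in> facets P" for t
  proof -
    have "\<exists>X. X \<in> facets (input_cplx n) \<and> t \<in> \<Psi> X" using that fm unfolding facet_map_def by blast
    then show ?thesis unfolding r_def by (rule someI_ex)
  qed
  have Act: "Act ?A = facets P" by (simp add: kappa_def)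
  have okr: "upd_ok ?M ?A (r t) t" if "t \<in> facets P" for t
    using upd_ok_iff[OF sp] r[OF that] that by simp
  have Wu: "W (update ?M ?A) = {(cls ?M ?A X t, t) | X t. upd_ok ?M ?A X t}"
    by (simp add: update_def)
  have bij: "bij_betw f (Act ?A) (W (update ?M ?A))"
    unfolding bij_betw_def
  proof
    show "inj_on f (Act ?A)" unfolding inj_on_def f_def by simp
    show "f ` Act ?A = W (update ?M ?A)"
    proof
      show "f ` Act ?A \<subseteq> W (update ?M ?A)" unfolding Act Wu f_def using okr by blast
      show "W (update ?M ?A) \<subseteq> f ` Act ?A"
      proof
        fix w assume "w \<in> W (update ?M ?A)"
        then obtain X t where w: "w = (cls ?M ?A X t, t)" and ok: "upd_ok ?M ?A X t"
          unfolding Wu by blast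
        have h: "X \<in> facets (input_cplx n)" "t \<in> facets P" "t \<in> \<Psi> X"
          using ok upd_ok_iff[OF sp] by simp_all
        have "cls ?M ?A X t = cls ?M ?A (r t) t"
          using cls_indep[OF sp h(2) h(1) _ h(3)] r[OF h(2)] by blast
        then have "w = f t" unfolding w f_def by simp
        then show "w \<in> f ` Act ?A" using h(2) Act by simp
      qed
    qed
  qed
  have rel: "(t, s) \<in> AR ?A a \<longleftrightarrow> (f t, f s) \<in> R (update ?M ?A) a"
    if t: "t \<in> Act ?A" and s: "s \<in> Act ?A" for a t s
  proof
    assume ts: "(t, s) \<in> AR ?A a"
    have tP: "t \<in> facets P" and sP: "s \<in> facets P" using t s Act by auto
    have "a \<in> chi (t \<inter> s)" using ts by (simp add: kappa_def)
    moreover have "chi (t \<inter> s) \<subseteq> chi (r t \<inter> r s)"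
      using sp r[OF tP] r[OF sP] unfolding simplicial_protocol_def by blast
    ultimately have "(r t, r s) \<in> R ?M a"
      using r[OF tP] r[OF sP] by (auto simp: input_model_def)
    have Ru: "((cls ?M ?A (r t) t, t), (cls ?M ?A (r s) s, s)) \<in> R (update ?M ?A) a"
      unfolding update_def
      apply simp
      apply (rule exI[of _ "r t"], rule conjI[OF refl], rule exI[of _ "r s"], rule conjI[OF refl])
      using okr[OF tP] okr[OF sP] ts \<open>(r t, r s) \<in> R ?M a\<close> by simp
    then show "(f t, f s) \<in> R (update ?M ?A) a" unfolding f_def .
  next
    assume "(f t, f s) \<in> R (update ?M ?A) a"
    then obtain X t' Y s' where "(f t, f s) = ((cls ?M ?A X t', t'), (cls ?M ?A Y s', s'))"
      and "(t', s') \<in> AR ?A a"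
      unfolding update_def by auto
    then show "(t, s) \<in> AR ?A a" unfolding f_def by simp
  qed
  show ?thesis
  proof (intro exI[of _ f] conjI)
    show "bij_betw f (Act ?A) (W (update ?M ?A))" by (rule bij)
    show "\<forall>a<n. \<forall>t\<in>Act ?A. \<forall>s\<in>Act ?A. (t, s) \<in> AR ?A a \<longleftrightarrow> (f t, f s) \<in> R (update ?M ?A) a"
      using rel by simp
  qed
qed

end
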